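(* Let $(G,s,t)$ be a TTSPG and let $L=(G,l)$ for a length function $l:E\to\mathbb R_{\ge0}$. Then $[L,s,t]$ is either empty or a closed bounded interval of $\mathbb R$ (possibly a single point).
   Context: A graph has a finite vertex set and a finite multiset $E$ of edges, each an unordered pair of distinct vertices. A linkage is $L=(G,l)$ with $l:E\to\mathbb R_{\ge0}$; $C(L)=\{p:V\to\mathbb R^2: |p(u)-p(v)|=l(\{u,v\})\ \forall\{u,v\}\in E\}$ and $M(L)$ is its quotient by orientation preserving isometries of $\mathbb R^2$. $[L,s,t]=\{|p(s)-p(t)|:p\in M(L)\}$. A TTG is $(G,s,t)$ with $s\neq t$ vertices of $G$; series composition $(G_1,s_1,t_1)\circ(G_2,s_2,t_2)=(G_1\cup_{t_2\sim s_1}G_2,s_2,t_1)$; parallel composition $(G_1,s_1,t_1)\|(G_2,s_2,t_2)=(G_1\cup_{s_1\sim s_2,t_1\sim t_2}G_2,s_1,t_1)$. TTSPGs form the smallest class of TTGs containing the single edge $(K_2,s,t)$ and closed under series and parallel composition. *)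

theory Defs
  imports "HOL-Analysis.Analysis"
begin

text \<open>A graph with (possibly parallel) edges: vertex set V, edge-label set E,
  and an endpoint map ends; edge e joins fst (ends e) and snd (ends e).
  Orientation of the pair is irrelevant for everything below. This is the paper's inductive class, realised up to isomorphism.\<close>

inductive ttspg :: "('e \<Rightarrow> 'v \<times> 'v) \<Rightarrow> 'v set \<Rightarrow> 'e set \<Rightarrow> 'v \<Rightarrow> 'v \<Rightarrow> bool"
  for ends :: "'e \<Rightarrow> 'v \<times> 'v" where
  edge: "\<lbrakk> s \<noteq> t; ends e = (s, t) \<or> ends e = (t, s) \<rbrakk>
         \<Longrightarrow> ttspg ends {s, t} {e} s t"
| series: "\<lbrakk> ttspg ends V1 E1 m t; ttspg ends V2 E2 s m;
             V1 \<inter> V2 = {m}; E1 \<inter> E2 = {} \<rbrakk>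
         \<Longrightarrow> ttspg ends (V1 \<union> V2) (E1 \<union> E2) s t"
| parallel: "\<lbrakk> ttspg ends V1 E1 s t; ttspg ends V2 E2 s t;
             V1 \<inter> V2 = {s, t}; E1 \<inter> E2 = {} \<rbrakk>
         \<Longrightarrow> ttspg ends (V1 \<union> V2) (E1 \<union> E2) s t"

text \<open>Configuration space C(L): placements of the vertices in the plane
  (identified with complex numbers) respecting all edge lengths.\<close>
definition configs :: "('e \<Rightarrow> 'v \<times> 'v) \<Rightarrow> 'v set \<Rightarrow> 'e set \<Rightarrow> ('e \<Rightarrow> real) \<Rightarrow> ('v \<Rightarrow> complex) set" where
  "configs ends V E l = {p. (\<forall>v. v \<notin> V \<longrightarrow> p v = 0) \<and>
      (\<forall>e\<in>E. dist (p (fst (ends e))) (p (snd (ends e))) = l e)}"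

text \<open>[L,s,t]: the set of realised distances between s and t. Distances are
  invariant under isometries, so taking the quotient M(L) does not change it.\<close>
definition dist_set :: "('e \<Rightarrow> 'v \<times> 'v) \<Rightarrow> 'v set \<Rightarrow> 'e set \<Rightarrow> ('e \<Rightarrow> real) \<Rightarrow> 'v \<Rightarrow> 'v \<Rightarrow> real set" where
  "dist_set ends V E l s t = {dist (p s) (p t) | p. p \<in> configs ends V E l}"

end

theory Submission
  imports Defs
begin

lemma ttspg_basic:
  assumes "ttspg ends V E s t"
  shows "s \<noteq> t \<and> s \<in> V \<and> t \<in> V \<and> (\<forall>e\<in>E. fst (ends e) \<in> V \<and> snd (ends e) \<in> V)"
  using assms
proof (induction rule: ttspg.induct)
  case (edge s t e)
  then show ?case by auto
next
  case (series V1 E1 m t V2 E2 s)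
  then show ?case by blast
next
  case (parallel V1 E1 s t V2 E2)
  then show ?case by blast
qed

lemma rigid:
  fixes a b A B :: complex
  assumes "dist a b = dist A B"
  shows "\<exists>c d. cmod c = 1 \<and> c*a + d = A \<and> c*b + d = B"
proof (cases "a = b")
  case True
  then have "A = B" using assms by simp
  then show ?thesis using True by (intro exI[of _ 1] exI[of _ "A - a"]) auto
next
  case False
  define c where "c = (B - A) / (b - a)"
  have n: "cmod (B - A) = cmod (b - a)" using assms by (simp add: dist_norm norm_minus_commute)
  have c1: "cmod c = 1" using n False by (simp add: c_def norm_divide)
  have "c*(b-a) = B - A" using False by (simp add: c_def)
  then have "c * b + (A - c*a) = B" by (simp add: algebra_simps)
  show ?thesis using c1 \<open>c * b + (A - c*a) = B\<close> by (intro exI[of _ c] exI[of _ "A - c*a"]) auto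
qed

lemma dist_motion:
  fixes c d x y :: complex
  assumes "cmod c = 1"
  shows "dist (c*x+d) (c*y+d) = dist x y"
proof -
  have "dist (c*x+d) (c*y+d) = cmod (c*(x-y))" by (simp add: dist_norm algebra_simps)
  also have "\<dots> = dist x y" using assms by (simp add: norm_mult dist_norm)
  finally show ?thesis .
qed

lemma dist_motion0:
  fixes c x y :: complex
  assumes "cmod c = 1"
  shows "dist (c*x) (c*y) = dist x y"
  using dist_motion[OF assms, of x 0 y] by simp

lemma configs_motion:
  assumes "p \<in> configs ends V E l" "cmod c = 1"
    "\<forall>e\<in>E. fst (ends e) \<in> V \<and> snd (ends e) \<in> V"
  shows "(\<lambda>v. if v \<in> V then c * p v + d else 0) \<in> configs ends V E l"
  using assms by (auto simp: configs_def dist_motion dist_motion0)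

lemma configs_restrict:
  assumes "p \<in> configs ends V E l" "E1 \<subseteq> E"
    "\<forall>e\<in>E1. fst (ends e) \<in> V1 \<and> snd (ends e) \<in> V1"
  shows "(\<lambda>v. if v \<in> V1 then p v else 0) \<in> configs ends V1 E1 l"
  using assms by (auto simp: configs_def)

lemma configs_glue:
  assumes "p1 \<in> configs ends V1 E1 l" "p2 \<in> configs ends V2 E2 l"
    "\<forall>v\<in>V1 \<inter> V2. p1 v = p2 v"
    "\<forall>e\<in>E1. fst (ends e) \<in> V1 \<and> snd (ends e) \<in> V1"
    "\<forall>e\<in>E2. fst (ends e) \<in> V2 \<and> snd (ends e) \<in> V2"
  shows "(\<lambda>v. if v \<in> V1 then p1 v else p2 v) \<in> configs ends (V1 \<union> V2) (E1 \<union> E2) l"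
proof -
  have "dist ((\<lambda>v. if v \<in> V1 then p1 v else p2 v) (fst (ends e)))
     ((\<lambda>v. if v \<in> V1 then p1 v else p2 v) (snd (ends e))) = l e" if "e \<in> E1 \<union> E2" for e
  proof (cases "e \<in> E1")
    case True
    then show ?thesis using assms(1,4) by (auto simp: configs_def)
  next
    case False
    then have e: "e \<in> E2" using that by auto
    have "(\<lambda>v. if v \<in> V1 then p1 v else p2 v) (fst (ends e)) = p2 (fst (ends e))"
         "(\<lambda>v. if v \<in> V1 then p1 v else p2 v) (snd (ends e)) = p2 (snd (ends e))"
      using assms(3,5) e by auto
    then show ?thesis using assms(2) e by (auto simp: configs_def)
  qed
  moreover have "\<forall>v. v \<notin> V1 \<union> V2 \<longrightarrow> (\<lambda>v. if v \<in> V1 then p1 v else p2 v) v = 0"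
    using assms(2) by (auto simp: configs_def)
  ultimately show ?thesis unfolding configs_def by blast
qed


lemma in_dist_setI:
  assumes "q \<in> configs ends V E l" "dist (q a) (q b) = x"
  shows "x \<in> dist_set ends V E l a b"
  using assms unfolding dist_set_def by blast

definition sfun :: "real \<times> real \<times> complex \<Rightarrow> real" where
  "sfun z = cmod (complex_of_real (fst z) - complex_of_real (fst (snd z)) * snd (snd z))"

lemma series_set:
  assumes b1: "\<forall>e\<in>E1. fst (ends e) \<in> V1 \<and> snd (ends e) \<in> V1"
    and b2: "\<forall>e\<in>E2. fst (ends e) \<in> V2 \<and> snd (ends e) \<in> V2"
    and mV1: "m \<in> V1" and tV1: "t \<in> V1" and sV2: "s \<in> V2" and mV2: "m \<in> V2"
    and I: "V1 \<inter> V2 = {m}" and sm: "s \<noteq> m"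
  shows "dist_set ends (V1 \<union> V2) (E1 \<union> E2) l s t =
    sfun ` (dist_set ends V1 E1 l m t \<times> dist_set ends V2 E2 l s m \<times> sphere 0 1)"
proof
  show "dist_set ends (V1 \<union> V2) (E1 \<union> E2) l s t \<subseteq>
    sfun ` (dist_set ends V1 E1 l m t \<times> dist_set ends V2 E2 l s m \<times> sphere 0 1)"
  proof
    fix dd assume "dd \<in> dist_set ends (V1 \<union> V2) (E1 \<union> E2) l s t"
    then obtain p where p: "p \<in> configs ends (V1 \<union> V2) (E1 \<union> E2) l" and dd: "dd = dist (p s) (p t)"
      unfolding dist_set_def by auto
    define x where "x = dist (p m) (p t)"
    define y where "y = dist (p s) (p m)"
    have p1: "(\<lambda>v. if v \<in> V1 then p v else 0) \<in> configs ends V1 E1 l"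
      by (rule configs_restrict[OF p _ b1]) auto
    have p2: "(\<lambda>v. if v \<in> V2 then p v else 0) \<in> configs ends V2 E2 l"
      by (rule configs_restrict[OF p _ b2]) auto
    have xD: "x \<in> dist_set ends V1 E1 l m t"
      by (rule in_dist_setI[OF p1]) (simp add: x_def mV1 tV1)
    have yD: "y \<in> dist_set ends V2 E2 l s m"
      by (rule in_dist_setI[OF p2]) (simp add: y_def mV2 sV2)
    have "dist (p m) (p t) = dist 0 (complex_of_real x)" by (simp add: x_def)
    then obtain c d0 where c: "cmod c = 1" and cm: "c * p m + d0 = 0" and ct: "c * p t + d0 = complex_of_real x"
      using rigid by blast
    define z where "z = c * p s + d0"
    have zy: "cmod z = y"
      using dist_motion[OF c, of "p s" d0 "p m"] cm by (simp add: z_def y_def dist_norm)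
    define w where "w = (if y = 0 then 1 else z / complex_of_real y)"
    have yw: "complex_of_real y * w = z" using zy by (auto simp: w_def)
    have w1: "w \<in> sphere 0 1" using zy by (auto simp: w_def norm_divide)
    have "dd = dist z (complex_of_real x)"
      using dist_motion[OF c, of "p s" d0 "p t"] ct by (simp add: dd z_def)
    also have "\<dots> = sfun (x, y, w)" by (simp add: sfun_def yw dist_norm norm_minus_commute)
    finally show "dd \<in> sfun ` (dist_set ends V1 E1 l m t \<times> dist_set ends V2 E2 l s m \<times> sphere 0 1)"
      using xD yD w1 by blast
  qed
next
  show "sfun ` (dist_set ends V1 E1 l m t \<times> dist_set ends V2 E2 l s m \<times> sphere 0 1)
      \<subseteq> dist_set ends (V1 \<union> V2) (E1 \<union> E2) l s t"
  proof clarify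
    fix x y w assume xD: "x \<in> dist_set ends V1 E1 l m t" and yD: "y \<in> dist_set ends V2 E2 l s m"
      and w: "w \<in> (sphere 0 1 :: complex set)"
    obtain p1 where p1: "p1 \<in> configs ends V1 E1 l" and x: "x = dist (p1 m) (p1 t)"
      using xD unfolding dist_set_def by auto
    obtain p2 where p2: "p2 \<in> configs ends V2 E2 l" and y: "y = dist (p2 s) (p2 m)"
      using yD unfolding dist_set_def by auto
    have "dist (p1 m) (p1 t) = dist 0 (complex_of_real x)" by (simp add: x)
    then obtain c1 d1 where c1: "cmod c1 = 1" and c1m: "c1 * p1 m + d1 = 0"
      and c1t: "c1 * p1 t + d1 = complex_of_real x"
      using rigid by blast
    have "dist (p2 m) (p2 s) = dist 0 (complex_of_real y * w)"
      using w by (simp add: y norm_mult dist_commute)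
    then obtain c2 d2 where c2: "cmod c2 = 1" and c2m: "c2 * p2 m + d2 = 0"
      and c2s: "c2 * p2 s + d2 = complex_of_real y * w"
      using rigid by blast
    define q1 where "q1 = (\<lambda>v. if v \<in> V1 then c1 * p1 v + d1 else 0)"
    define q2 where "q2 = (\<lambda>v. if v \<in> V2 then c2 * p2 v + d2 else 0)"
    have q1: "q1 \<in> configs ends V1 E1 l" unfolding q1_def by (rule configs_motion[OF p1 c1 b1])
    have q2: "q2 \<in> configs ends V2 E2 l" unfolding q2_def by (rule configs_motion[OF p2 c2 b2])
    have agree: "\<forall>v\<in>V1 \<inter> V2. q1 v = q2 v" using I mV1 mV2 c1m c2m by (auto simp: q1_def q2_def)
    have q: "(\<lambda>v. if v \<in> V1 then q1 v else q2 v) \<in> configs ends (V1 \<union> V2) (E1 \<union> E2) l"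
      by (rule configs_glue[OF q1 q2 agree b1 b2])
    have sV1: "s \<notin> V1" using I sV2 sm by auto
    have "sfun (x, y, w) = dist ((\<lambda>v. if v \<in> V1 then q1 v else q2 v) s) ((\<lambda>v. if v \<in> V1 then q1 v else q2 v) t)"
      using sV1 tV1 sV2 c2s c1t by (simp add: q1_def q2_def sfun_def dist_norm norm_minus_commute)
    then show "sfun (x, y, w) \<in> dist_set ends (V1 \<union> V2) (E1 \<union> E2) l s t"
      by (intro in_dist_setI[OF q]) simp
  qed
qed

lemma parallel_set:
  assumes b1: "\<forall>e\<in>E1. fst (ends e) \<in> V1 \<and> snd (ends e) \<in> V1"
    and b2: "\<forall>e\<in>E2. fst (ends e) \<in> V2 \<and> snd (ends e) \<in> V2"
    and "s \<in> V1" "t \<in> V1" "s \<in> V2" "t \<in> V2"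
    and I: "V1 \<inter> V2 = {s, t}"
  shows "dist_set ends (V1 \<union> V2) (E1 \<union> E2) l s t =
    dist_set ends V1 E1 l s t \<inter> dist_set ends V2 E2 l s t"
proof
  show "dist_set ends (V1 \<union> V2) (E1 \<union> E2) l s t \<subseteq>
    dist_set ends V1 E1 l s t \<inter> dist_set ends V2 E2 l s t"
  proof
    fix dd assume "dd \<in> dist_set ends (V1 \<union> V2) (E1 \<union> E2) l s t"
    then obtain p where p: "p \<in> configs ends (V1 \<union> V2) (E1 \<union> E2) l" and dd: "dd = dist (p s) (p t)"
      unfolding dist_set_def by auto
    have p1: "(\<lambda>v. if v \<in> V1 then p v else 0) \<in> configs ends V1 E1 l"
      by (rule configs_restrict[OF p _ b1]) auto
    have p2: "(\<lambda>v. if v \<in> V2 then p v else 0) \<in> configs ends V2 E2 l"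
      by (rule configs_restrict[OF p _ b2]) auto
    show "dd \<in> dist_set ends V1 E1 l s t \<inter> dist_set ends V2 E2 l s t"
      using in_dist_setI[OF p1, of s t dd] in_dist_setI[OF p2, of s t dd] assms(3-6) dd by simp
  qed
next
  show "dist_set ends V1 E1 l s t \<inter> dist_set ends V2 E2 l s t
    \<subseteq> dist_set ends (V1 \<union> V2) (E1 \<union> E2) l s t"
  proof
    fix dd assume "dd \<in> dist_set ends V1 E1 l s t \<inter> dist_set ends V2 E2 l s t"
    then obtain p1 p2 where p1: "p1 \<in> configs ends V1 E1 l" and x: "dd = dist (p1 s) (p1 t)"
      and p2: "p2 \<in> configs ends V2 E2 l" and y: "dd = dist (p2 s) (p2 t)"
      unfolding dist_set_def by auto
    obtain c d0 where c: "cmod c = 1" and cs: "c * p2 s + d0 = p1 s" and ct: "c * p2 t + d0 = p1 t"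
      using rigid[of "p2 s" "p2 t" "p1 s" "p1 t"] x y by auto
    define q2 where "q2 = (\<lambda>v. if v \<in> V2 then c * p2 v + d0 else 0)"
    have q2: "q2 \<in> configs ends V2 E2 l" unfolding q2_def by (rule configs_motion[OF p2 c b2])
    have agree: "\<forall>v\<in>V1 \<inter> V2. p1 v = q2 v" using I assms(5,6) cs ct by (auto simp: q2_def)
    have q: "(\<lambda>v. if v \<in> V1 then p1 v else q2 v) \<in> configs ends (V1 \<union> V2) (E1 \<union> E2) l"
      by (rule configs_glue[OF p1 q2 agree b1 b2])
    show "dd \<in> dist_set ends (V1 \<union> V2) (E1 \<union> E2) l s t"
      by (rule in_dist_setI[OF q]) (simp add: assms(3,4) x)
  qed
qed


lemma sfun_interval:
  fixes A B :: "real set"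
  assumes "compact A" "connected A" "compact B" "connected B"
  shows "compact (sfun ` (A \<times> B \<times> sphere 0 1)) \<and> connected (sfun ` (A \<times> B \<times> sphere 0 1))"
proof -
  have cont: "continuous_on UNIV sfun" unfolding sfun_def by (intro continuous_intros)
  have sph: "connected (sphere (0::complex) 1)" by (rule connected_sphere) simp
  have "compact (A \<times> B \<times> sphere (0::complex) 1)"
    using assms by (intro compact_Times compact_sphere)
  moreover have "connected (A \<times> B \<times> sphere (0::complex) 1)"
    using assms sph by (intro connected_Times)
  ultimately show ?thesis
    using cont by (meson compact_continuous_image connected_continuous_image continuous_on_subset subset_UNIV)
qed

lemma interval_or_empty:
  fixes S :: "real set"
  assumes "S = {} \<or> (\<exists>a b. a \<le> b \<and> S = {a..b})"
  shows "compact S \<and> connected S"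
  using assms by auto

lemma to_interval:
  fixes S :: "real set"
  assumes "compact S" "connected S"
  shows "S = {} \<or> (\<exists>a b. a \<le> b \<and> S = {a..b})"
proof -
  obtain a b where "S = {a..b}" using assms connected_compact_interval_1 by blast
  then show ?thesis by (cases "a \<le> b") auto
qed

lemma main_ind:
  assumes "ttspg ends V E s t"
  shows "(\<forall>e\<in>E. l e \<ge> 0) \<longrightarrow> compact (dist_set ends V E l s t) \<and> connected (dist_set ends V E l s t)"
  using assms
proof (induction rule: ttspg.induct)
  case (edge s t e)
  show ?case
  proof
    assume le: "\<forall>e'\<in>{e}. l e' \<ge> 0"
    have "dist_set ends {s, t} {e} l s t = {l e}"
    proof
      show "dist_set ends {s, t} {e} l s t \<subseteq> {l e}"
        using edge(2) by (auto simp: dist_set_def configs_def dist_commute)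
      define p where "p = (\<lambda>v. if v = t then complex_of_real (l e) else 0)"
      have p: "p \<in> configs ends {s, t} {e} l"
      proof -
        have "dist (p (fst (ends e))) (p (snd (ends e))) = l e"
          using edge(2)
        proof
          assume "ends e = (s, t)" then show ?thesis using edge(1) le by (simp add: p_def)
        next
          assume "ends e = (t, s)" then show ?thesis using edge(1) le by (simp add: p_def)
        qed
        then show ?thesis by (auto simp: configs_def p_def)
      qed
      have "dist (p s) (p t) = l e" using edge(1) le by (simp add: p_def)
      then show "{l e} \<subseteq> dist_set ends {s, t} {e} l s t"
        using in_dist_setI[OF p] by blast
    qed
    then show "compact (dist_set ends {s, t} {e} l s t) \<and> connected (dist_set ends {s, t} {e} l s t)"
      by simp
  qed
next
  case (series V1 E1 m t V2 E2 s)
  note B1 = ttspg_basic[OF series(1)] and B2 = ttspg_basic[OF series(2)]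
  show ?case
  proof
    assume le: "\<forall>e\<in>E1 \<union> E2. l e \<ge> 0"
    have eq: "dist_set ends (V1 \<union> V2) (E1 \<union> E2) l s t =
      sfun ` (dist_set ends V1 E1 l m t \<times> dist_set ends V2 E2 l s m \<times> sphere 0 1)"
      by (rule series_set) (use B1 B2 series.hyps(3) in auto)
    show "compact (dist_set ends (V1 \<union> V2) (E1 \<union> E2) l s t) \<and> connected (dist_set ends (V1 \<union> V2) (E1 \<union> E2) l s t)"
      unfolding eq using sfun_interval series.IH le by simp
  qed
next
  case (parallel V1 E1 s t V2 E2)
  note B1 = ttspg_basic[OF parallel(1)] and B2 = ttspg_basic[OF parallel(2)]
  show ?case
  proof
    assume le: "\<forall>e\<in>E1 \<union> E2. l e \<ge> 0"
    have eq: "dist_set ends (V1 \<union> V2) (E1 \<union> E2) l s t =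
      dist_set ends V1 E1 l s t \<inter> dist_set ends V2 E2 l s t"
      by (rule parallel_set) (use B1 B2 parallel.hyps(3) in auto)
    have c1: "compact (dist_set ends V1 E1 l s t)" "connected (dist_set ends V1 E1 l s t)"
      and c2: "compact (dist_set ends V2 E2 l s t)" "connected (dist_set ends V2 E2 l s t)"
      using parallel.IH le by auto
    obtain a1 b1 where i1: "dist_set ends V1 E1 l s t = {a1..b1}"
      using c1 connected_compact_interval_1 by blast
    obtain a2 b2 where i2: "dist_set ends V2 E2 l s t = {a2..b2}"
      using c2 connected_compact_interval_1 by blast
    have "connected ({a1..b1} \<inter> {a2..b2})" by (simp add: Int_atLeastAtMost)
    then show "compact (dist_set ends (V1 \<union> V2) (E1 \<union> E2) l s t) \<and> connected (dist_set ends (V1 \<union> V2) (E1 \<union> E2) l s t)"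
      unfolding eq i1 i2 by (simp add: compact_Int)
  qed
qed

theorem mainTheorem4:
  fixes ends :: "'e \<Rightarrow> 'v \<times> 'v" and V :: "'v set" and E :: "'e set"
    and l :: "'e \<Rightarrow> real" and s t :: 'v
  assumes "ttspg ends V E s t"
    and "\<forall>e\<in>E. l e \<ge> 0"
  shows "dist_set ends V E l s t = {} \<or>
         (\<exists>a b. a \<le> b \<and> dist_set ends V E l s t = {a..b})"
  using main_ind[OF assms(1)] assms(2) to_interval by blast

end
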